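(* Let $\mathcal A=\mathbb C[z^{-1},z]]$ and let $\phi\colon H_R\to\mathcal A$ be a character. The following are equivalent: (1) For every $w\in H_R$, $\sum_w\phi(S(w_1))\,|w_2|\,\phi(w_2)\in z^{-1}\mathbb C[[z]]$, i.e. $\phi\circ(S\star Y)$ maps into $z^{-1}\mathbb C[[z]]$. (2) For every $n\ge0$ and $w\in H_R$, $\sum_w\phi(S(w_1))\,|w_2|^n\,\phi(w_2)\in z^{-n}\mathbb C[[z]]$. (3) For every $s\in\mathbb C$ and $w\in H_R$, $\sum_w\phi(S(w_1))\,e^{sz|w_2|}\,\phi(w_2)\in\mathbb C[[z]]$, i.e. $\phi^{\star-1}\star(\phi\circ\theta_{sz})$ maps into $\mathbb C[[z]]$.
   Context: $\mathbb C[z^{-1},z]]$ denotes formal Laurent series in $z$ with finitely many negative powers, $\mathbb C[[z]]$ formal power series. $H_R$ is the Connes–Kreimer Hopf algebra of rooted trees over $\mathbb C$ (basis rooted forests, $|w|$ number of nodes, coproduct $\Delta w=\sum_ww_1\otimes w_2$ determined by $\Delta\circ B_+=B_+\otimes\mathbb 1+(\mathrm{id}\otimes B_+)\circ\Delta$ with $B_+$ grafting onto a new root, antipode $S$). Sums over homogeneous components are understood by linearity. $Y$ is the grading operator $Yw=|w|w$; $\phi\circ\theta_{sz}$ is the character $w\mapsto e^{sz|w|}\phi(w)$ (with $e^{sz|w|}$ expanded as a power series in $z$). A character is a unital algebra morphism; $\phi^{\star-1}=\phi\circ S$. *)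

theory Defs
  imports Complex_Main "HOL-Library.Multiset" "HOL-Library.Poly_Mapping"
    "HOL-Library.Product_Plus" "HOL-Computational_Algebra.Formal_Laurent_Series"
begin

text \<open>Non-planar rooted trees: a tree is a root with a multiset of subtrees (the forest of
  its children). A rooted forest is a multiset of trees; the empty forest is the unit.\<close>

datatype tree = Node "tree multiset"

type_synonym forest = "tree multiset"

definition Bplus :: "forest \<Rightarrow> tree" where
  "Bplus f = Node f"

primrec nodes :: "tree \<Rightarrow> nat" where
  "nodes (Node ts) = Suc (sum_mset (image_mset nodes ts))"

text \<open>Number of nodes of a forest, written |w|.\<close>
definition fsize :: "forest \<Rightarrow> nat" where
  "fsize f = sum_mset (image_mset nodes f)"

text \<open>H_R is the free commutative complex algebra on rooted trees, i.e. the complex vector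
  space with basis the rooted forests, multiplication being disjoint union of forests.
  H_R tensor H_R has basis the pairs of forests.\<close>

type_synonym HR = "forest \<Rightarrow>\<^sub>0 complex"
type_synonym HR2 = "(forest \<times> forest) \<Rightarrow>\<^sub>0 complex"

definition id_tensor_Bplus :: "HR2 \<Rightarrow> HR2" where
  "id_tensor_Bplus X =
     (\<Sum>k\<in>Poly_Mapping.keys X. Poly_Mapping.single (fst k, {#Bplus (snd k)#}) (Poly_Mapping.lookup X k))"

text \<open>Coproduct on trees, via Delta(B_+ f) = B_+ f tensor 1 + (id tensor B_+)(Delta f),
  with Delta multiplicative on forests.\<close>
primrec cop_tree :: "tree \<Rightarrow> HR2" where
  "cop_tree (Node ts) = Poly_Mapping.single ({#Node ts#}, {#}) 1
      + id_tensor_Bplus (prod_mset (image_mset cop_tree ts))"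

definition cop :: "forest \<Rightarrow> HR2" where
  "cop f = prod_mset (image_mset cop_tree f)"

definition coproduct :: "HR \<Rightarrow> HR2" where
  "coproduct w = (\<Sum>f\<in>Poly_Mapping.keys w. Poly_Mapping.single ({#}, {#}) (Poly_Mapping.lookup w f) * cop f)"

lemma keys_id_tensor_Bplus:
  "Poly_Mapping.keys (id_tensor_Bplus X) \<subseteq> (\<lambda>k. (fst k, {#Bplus (snd k)#})) ` Poly_Mapping.keys X"
proof
  fix x assume "x \<in> Poly_Mapping.keys (id_tensor_Bplus X)"
  then have "x \<in> (\<Union>k\<in>Poly_Mapping.keys X. Poly_Mapping.keys (Poly_Mapping.single (fst k, {#Bplus (snd k)#}) (Poly_Mapping.lookup X k)))"
    unfolding id_tensor_Bplus_def by (rule subsetD[OF keys_sum])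
  then show "x \<in> (\<lambda>k. (fst k, {#Bplus (snd k)#})) ` Poly_Mapping.keys X"
    by (auto split: if_splits)
qed

lemma fsize_add [simp]: "fsize (f + g) = fsize f + fsize g"
  by (simp add: fsize_def)

lemma fsize_empty [simp]: "fsize {#} = 0"
  by (simp add: fsize_def)

lemma keys_prod_mset_cop:
  assumes "\<And>t. t \<in># ts \<Longrightarrow> \<forall>k\<in>Poly_Mapping.keys (cop_tree t). fsize (fst k) + fsize (snd k) = nodes t"
  shows "\<forall>k\<in>Poly_Mapping.keys (prod_mset (image_mset cop_tree ts)). fsize (fst k) + fsize (snd k) = fsize ts"
  using assms
proof (induction ts)
  case empty
  then show ?case by simp
next
  case (add t ts)
  have IH: "\<forall>k\<in>Poly_Mapping.keys (prod_mset (image_mset cop_tree ts)). fsize (fst k) + fsize (snd k) = fsize ts"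
    using add.IH add.prems by simp
  have Ht: "\<forall>k\<in>Poly_Mapping.keys (cop_tree t). fsize (fst k) + fsize (snd k) = nodes t"
    using add.prems by simp
  have fs: "fsize (add_mset t ts) = nodes t + fsize ts"
    by (simp add: fsize_def)
  show ?case
  proof
    fix k assume k: "k \<in> Poly_Mapping.keys (prod_mset (image_mset cop_tree (add_mset t ts)))"
    have "prod_mset (image_mset cop_tree (add_mset t ts)) = cop_tree t * prod_mset (image_mset cop_tree ts)"
      by simp
    with k have "k \<in> Poly_Mapping.keys (cop_tree t * prod_mset (image_mset cop_tree ts))"
      by simp
    then have "k \<in> {a + b |a b. a \<in> Poly_Mapping.keys (cop_tree t) \<and> b \<in> Poly_Mapping.keys (prod_mset (image_mset cop_tree ts))}"
      by (rule subsetD[OF keys_mult])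
    then obtain a b where ab: "k = a + b" "a \<in> Poly_Mapping.keys (cop_tree t)"
      "b \<in> Poly_Mapping.keys (prod_mset (image_mset cop_tree ts))" by blast
    have "fst k = fst a + fst b" "snd k = snd a + snd b"
      using ab(1) by (simp_all add: plus_prod_def split: prod.splits)
    moreover have "fsize (fst a) + fsize (snd a) = nodes t" using Ht ab(2) by blast
    moreover have "fsize (fst b) + fsize (snd b) = fsize ts" using IH ab(3) by blast
    ultimately show "fsize (fst k) + fsize (snd k) = fsize (add_mset t ts)"
      using fs by simp
  qed
qed

lemma keys_cop_tree_size:
  "\<forall>k\<in>Poly_Mapping.keys (cop_tree t). fsize (fst k) + fsize (snd k) = nodes t"
proof (induction t)
  case (Node ts)
  have IH: "\<forall>k\<in>Poly_Mapping.keys (prod_mset (image_mset cop_tree ts)). fsize (fst k) + fsize (snd k) = fsize ts"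
    by (rule keys_prod_mset_cop) (use Node in auto)
  show ?case
  proof
    fix k assume "k \<in> Poly_Mapping.keys (cop_tree (Node ts))"
    then have "k = ({#Node ts#}, {#}) \<or> k \<in> (\<lambda>k. (fst k, {#Bplus (snd k)#})) ` Poly_Mapping.keys (prod_mset (image_mset cop_tree ts))"
      using keys_add[of "Poly_Mapping.single ({#Node ts#}, {#}) (1::complex)"] keys_id_tensor_Bplus
      by (auto split: if_splits)
    then show "fsize (fst k) + fsize (snd k) = nodes (Node ts)"
      using IH by (auto simp: fsize_def Bplus_def)
  qed
qed

lemma keys_cop_size:
  "k \<in> Poly_Mapping.keys (cop f) \<Longrightarrow> fsize (fst k) + fsize (snd k) = fsize f"
  using keys_prod_mset_cop[of f] keys_cop_tree_size unfolding cop_def by blast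

lemma fsize_pos: "f \<noteq> {#} \<Longrightarrow> 0 < fsize f"
proof (cases f)
  case (add t g)
  have "0 < nodes t" by (cases t) simp
  then show ?thesis using add by (simp add: fsize_def)
qed simp

text \<open>The antipode on basis forests, determined by m(S tensor id)Delta = eta epsilon:
  S(1) = 1 and, for a nonempty forest w, S(w) = - sum over the terms w_1 tensor w_2 of
  Delta w with w_2 not equal to 1 of S(w_1) w_2 (the only term of Delta w with w_2 = 1 being
  w tensor 1).\<close>
function antipode :: "forest \<Rightarrow> HR" where
  "antipode f = (if f = {#} then 1 else
     - (\<Sum>k\<in>{k\<in>Poly_Mapping.keys (cop f). snd k \<noteq> {#}}.
          Poly_Mapping.single {#} (Poly_Mapping.lookup (cop f) k) * antipode (fst k)
          * Poly_Mapping.single (snd k) 1))"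
  by pat_completeness auto
termination
proof (relation "measure fsize")
  fix f k
  assume "\<not> f = {#}" "k \<in> {k\<in>Poly_Mapping.keys (cop f). snd k \<noteq> {#}}"
  then show "(fst k, f) \<in> measure fsize"
    using keys_cop_size[of k f] fsize_pos[of "snd k"] by auto
qed auto

declare antipode.simps [simp del]

definition character :: "(HR \<Rightarrow> complex fls) \<Rightarrow> bool" where
  "character \<phi> \<longleftrightarrow>
     (\<forall>x y. \<phi> (x + y) = \<phi> x + \<phi> y) \<and>
     (\<forall>x y. \<phi> (x * y) = \<phi> x * \<phi> y) \<and>
     (\<forall>c. \<phi> (Poly_Mapping.single {#} c) = fls_const c)"

definition forest_elem :: "forest \<Rightarrow> HR" where
  "forest_elem f = Poly_Mapping.single f 1"

definition sweedler_sum :: "HR2 \<Rightarrow> (forest \<Rightarrow> forest \<Rightarrow> complex fls) \<Rightarrow> complex fls" where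
  "sweedler_sum X F = (\<Sum>k\<in>Poly_Mapping.keys X. fls_const (Poly_Mapping.lookup X k) * F (fst k) (snd k))"

definition in_zpow_fps :: "int \<Rightarrow> complex fls \<Rightarrow> bool" where
  "in_zpow_fps m f \<longleftrightarrow> (\<forall>k<m. fls_nth f k = 0)"

end

theory Submission
  imports Defs
begin


definition SW :: "('a \<Rightarrow>\<^sub>0 complex) \<Rightarrow> ('a \<Rightarrow> complex fls) \<Rightarrow> complex fls" where
  "SW X F = (\<Sum>k\<in>Poly_Mapping.keys X. fls_const (Poly_Mapping.lookup X k) * F k)"

lemma SW_superset:
  assumes "finite K" "Poly_Mapping.keys X \<subseteq> K"
  shows "SW X F = (\<Sum>k\<in>K. fls_const (Poly_Mapping.lookup X k) * F k)"
  unfolding SW_def using assms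
  by (intro sum.mono_neutral_left) (auto simp: in_keys_iff)

lemma SW_add: "SW (X + Y) F = SW X F + SW Y F"
proof -
  let ?K = "Poly_Mapping.keys X \<union> Poly_Mapping.keys Y"
  have "SW (X + Y) F = (\<Sum>k\<in>?K. fls_const (Poly_Mapping.lookup (X+Y) k) * F k)"
    using keys_add[of X Y] by (intro SW_superset) auto
  also have "\<dots> = (\<Sum>k\<in>?K. fls_const (Poly_Mapping.lookup X k) * F k)
     + (\<Sum>k\<in>?K. fls_const (Poly_Mapping.lookup Y k) * F k)"
    by (simp add: lookup_add fls_plus_const[symmetric] distrib_right sum.distrib)
  also have "\<dots> = SW X F + SW Y F"
    using SW_superset[of ?K X F] SW_superset[of ?K Y F] by simp
  finally show ?thesis .
qed

lemma SW_zero [simp]: "SW 0 F = 0"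
  by (simp add: SW_def)

lemma SW_sum: "SW (\<Sum>i\<in>I. X i) F = (\<Sum>i\<in>I. SW (X i) F)"
  by (induction I rule: infinite_finite_induct) (auto simp: SW_add)

lemma SW_single [simp]: "SW (Poly_Mapping.single k c) F = fls_const c * F k"
  by (simp add: SW_def)

lemma pm_decomp: "X = (\<Sum>k\<in>Poly_Mapping.keys X. Poly_Mapping.single k (Poly_Mapping.lookup X k))"
  by (rule poly_mapping_eqI)
     (auto simp: lookup_sum lookup_single when_def in_keys_iff
       intro!: sum.neutral[symmetric] split: if_splits cong: sum.cong)

lemma SW_cong: "(\<And>k. k \<in> Poly_Mapping.keys X \<Longrightarrow> F k = G k) \<Longrightarrow> SW X F = SW X G"
  by (simp add: SW_def)

lemma SW_fadd: "SW X (\<lambda>k. F k + G k) = SW X F + SW X G"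
  by (simp add: SW_def distrib_left sum.distrib)

lemma SW_fzero [simp]: "SW X (\<lambda>k. 0) = 0"
  by (simp add: SW_def)

lemma SW_fneg: "SW X (\<lambda>k. - F k) = - SW X F"
  by (simp add: SW_def sum_negf)

lemma SW_cmult_left: "c * SW X F = SW X (\<lambda>k. c * F k)"
  unfolding SW_def by (simp add: sum_distrib_left mult.left_commute)

lemma SW_cmult_right: "SW X F * c = SW X (\<lambda>k. F k * c)"
  using SW_cmult_left[of c X F] by (simp add: mult.commute)

lemma SW_swap: "SW X (\<lambda>a. SW Y (\<lambda>b. F a b)) = SW Y (\<lambda>b. SW X (\<lambda>a. F a b))"
  unfolding SW_def by (simp add: sum_distrib_left mult_ac sum.swap[of _ "Poly_Mapping.keys X"])

lemma SW_mult:
  fixes X Y :: "'a::monoid_add \<Rightarrow>\<^sub>0 complex"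
  shows "SW (X * Y) F = SW X (\<lambda>a. SW Y (\<lambda>b. F (a + b)))"
proof -
  have "X * Y = (\<Sum>a\<in>Poly_Mapping.keys X. \<Sum>b\<in>Poly_Mapping.keys Y.
      Poly_Mapping.single (a + b) (Poly_Mapping.lookup X a * Poly_Mapping.lookup Y b))"
    apply (subst pm_decomp[of X])
    apply (subst pm_decomp[of Y])
    apply (simp add: sum_product mult_single)
    done
  then have "SW (X * Y) F = (\<Sum>a\<in>Poly_Mapping.keys X. \<Sum>b\<in>Poly_Mapping.keys Y.
      fls_const (Poly_Mapping.lookup X a) * (fls_const (Poly_Mapping.lookup Y b) * F (a + b)))"
    by (simp add: SW_sum mult_ac)
  then show ?thesis by (simp add: SW_def sum_distrib_left)
qed

lemma SW_one [simp]: "SW (1 :: 'a::monoid_add \<Rightarrow>\<^sub>0 complex) F = F 0"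
  by (metis SW_single fls_const_1 mult_1 single_one)

lemma cop_empty [simp]: "cop {#} = 1"
  by (simp add: cop_def)

lemma cop_plus: "cop (f + g) = cop f * cop g"
  by (simp add: cop_def)

lemma cop_single_tree: "cop {#t#} = cop_tree t"
  by (simp add: cop_def)

lemma SW_idB: "SW (id_tensor_Bplus X) F = SW X (\<lambda>k. F (fst k, {#Bplus (snd k)#}))"
  unfolding id_tensor_Bplus_def SW_sum by (simp add: SW_def[of X])

lemma SW_cop_tree: "SW (cop {#Node ts#}) F = F ({#Node ts#}, {#}) + SW (cop ts) (\<lambda>k. F (fst k, {#Node (snd k)#}))"
  by (simp add: cop_single_tree SW_add SW_idB Bplus_def cop_def)

lemma forest_induct:
  assumes e: "P {#}" and p: "\<And>f g. P f \<Longrightarrow> P g \<Longrightarrow> P (f + g)"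
    and t: "\<And>ts. P ts \<Longrightarrow> P {#Node ts#}"
  shows "P f"
proof -
  have ms: "P ts" if "\<And>t. t \<in># ts \<Longrightarrow> P {#t#}" for ts
    using that
  proof (induction ts)
    case empty then show ?case using e by simp
  next
    case (add x ts)
    have "P {#x#}" "P ts" using add by auto
    then have "P ({#x#} + ts)" using p by blast
    then show ?case by simp
  qed
  have tr: "P {#t#}" for t
  proof (induction t)
    case (Node ts)
    then show ?case using ms t by auto
  qed
  show ?thesis using ms tr by blast
qed



lemma cop_counit_R: "SW (cop f) (\<lambda>k. if snd k = {#} then G (fst k) else 0) = G f"
proof (induction f arbitrary: G rule: forest_induct)
  case 1 then show ?case by simp
next
  case (2 f g)
  have "SW (cop (f + g)) (\<lambda>k. if snd k = {#} then G (fst k) else 0)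
      = SW (cop f) (\<lambda>a. if snd a = {#} then SW (cop g) (\<lambda>b. if snd b = {#} then G (fst a + fst b) else 0) else 0)"
    unfolding cop_plus SW_mult by (intro SW_cong) (auto cong: if_cong)
  also have "\<dots> = SW (cop f) (\<lambda>a. if snd a = {#} then G (fst a + g) else 0)"
  proof (intro SW_cong)
    fix a show "(if snd a = {#} then SW (cop g) (\<lambda>b. if snd b = {#} then G (fst a + fst b) else 0) else 0)
       = (if snd a = {#} then G (fst a + g) else 0)"
      using "2.IH"(2)[of "\<lambda>x. G (fst a + x)"] by simp
  qed
  also have "\<dots> = G (f + g)"
    using "2.IH"(1)[of "\<lambda>x. G (x + g)"] by simp
  finally show ?case .
next
  case (3 ts)
  then show ?case by (simp add: SW_cop_tree)
qed

lemma cop_counit_L: "SW (cop f) (\<lambda>k. if fst k = {#} then G (snd k) else 0) = G f"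
proof (induction f arbitrary: G rule: forest_induct)
  case 1 then show ?case by simp
next
  case (2 f g)
  have "SW (cop (f + g)) (\<lambda>k. if fst k = {#} then G (snd k) else 0)
      = SW (cop f) (\<lambda>a. if fst a = {#} then SW (cop g) (\<lambda>b. if fst b = {#} then G (snd a + snd b) else 0) else 0)"
    unfolding cop_plus SW_mult by (intro SW_cong) (auto cong: if_cong)
  also have "\<dots> = SW (cop f) (\<lambda>a. if fst a = {#} then G (snd a + g) else 0)"
  proof (intro SW_cong)
    fix a show "(if fst a = {#} then SW (cop g) (\<lambda>b. if fst b = {#} then G (snd a + snd b) else 0) else 0)
       = (if fst a = {#} then G (snd a + g) else 0)"
      using "2.IH"(2)[of "\<lambda>x. G (snd a + x)"] by simp
  qed
  also have "\<dots> = G (f + g)"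
    using "2.IH"(1)[of "\<lambda>x. G (x + g)"] by simp
  finally show ?case .
next
  case (3 ts)
  then show ?case using "3.IH"[of "\<lambda>x. G {#Node x#}"] by (simp add: SW_cop_tree cong: if_cong)
qed

lemma coassoc:
  "SW (cop f) (\<lambda>k. SW (cop (fst k)) (\<lambda>j. F (fst j) (snd j) (snd k)))
 = SW (cop f) (\<lambda>k. SW (cop (snd k)) (\<lambda>j. F (fst k) (fst j) (snd j)))"
proof (induction f arbitrary: F rule: forest_induct)
  case 1 then show ?case by simp
next
  case (2 f g)
  define F1 where "F1 x y z = SW (cop g) (\<lambda>b. SW (cop (fst b)) (\<lambda>j'. F (x + fst j') (y + snd j') (z + snd b)))" for x y z
  have "SW (cop (f + g)) (\<lambda>k. SW (cop (fst k)) (\<lambda>j. F (fst j) (snd j) (snd k)))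
     = SW (cop f) (\<lambda>a. SW (cop g) (\<lambda>b. SW (cop (fst a)) (\<lambda>j. SW (cop (fst b)) (\<lambda>j'.
          F (fst j + fst j') (snd j + snd j') (snd a + snd b)))))"
    by (simp add: cop_plus SW_mult)
  also have "\<dots> = SW (cop f) (\<lambda>a. SW (cop (fst a)) (\<lambda>j. F1 (fst j) (snd j) (snd a)))"
    unfolding F1_def by (subst SW_swap) simp
  also have "\<dots> = SW (cop f) (\<lambda>a. SW (cop (snd a)) (\<lambda>j. F1 (fst a) (fst j) (snd j)))"
    by (rule "2.IH"(1))
  also have "\<dots> = SW (cop f) (\<lambda>a. SW (cop (snd a)) (\<lambda>j. SW (cop g) (\<lambda>b. SW (cop (snd b)) (\<lambda>j'.
          F (fst a + fst b) (fst j + fst j') (snd j + snd j')))))"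
  proof (intro SW_cong)
    fix a j
    show "F1 (fst a) (fst j) (snd j) = SW (cop g) (\<lambda>b. SW (cop (snd b)) (\<lambda>j'.
          F (fst a + fst b) (fst j + fst j') (snd j + snd j')))"
      unfolding F1_def
      using "2.IH"(2)[of "\<lambda>x y z. F (fst a + x) (fst j + y) (snd j + z)"] by simp
  qed
  also have "\<dots> = SW (cop (f + g)) (\<lambda>k. SW (cop (snd k)) (\<lambda>j. F (fst k) (fst j) (snd j)))"
    by (subst SW_swap) (simp add: cop_plus SW_mult)
  finally show ?case .
next
  case (3 ts)
  have "SW (cop {#Node ts#}) (\<lambda>k. SW (cop (fst k)) (\<lambda>j. F (fst j) (snd j) (snd k)))
    = F {#Node ts#} {#} {#} + SW (cop ts) (\<lambda>k. F (fst k) {#Node (snd k)#} {#})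
      + SW (cop ts) (\<lambda>k. SW (cop (fst k)) (\<lambda>j. F (fst j) (snd j) {#Node (snd k)#}))"
    by (simp add: SW_cop_tree)
  also have "\<dots> = F {#Node ts#} {#} {#} + SW (cop ts) (\<lambda>k. F (fst k) {#Node (snd k)#} {#})
      + SW (cop ts) (\<lambda>k. SW (cop (snd k)) (\<lambda>j. F (fst k) (fst j) {#Node (snd j)#}))"
    using "3.IH"[of "\<lambda>x y z. F x y {#Node z#}"] by simp
  also have "\<dots> = SW (cop {#Node ts#}) (\<lambda>k. SW (cop (snd k)) (\<lambda>j. F (fst k) (fst j) (snd j)))"
    by (simp add: SW_cop_tree SW_fadd)
  finally show ?case .
qed



definition conv :: "(forest \<Rightarrow> complex fls) \<Rightarrow> (forest \<Rightarrow> complex fls) \<Rightarrow> forest \<Rightarrow> complex fls" where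
  "conv A B f = SW (cop f) (\<lambda>k. A (fst k) * B (snd k))"

definition eps :: "forest \<Rightarrow> complex fls" where
  "eps f = (if f = {#} then 1 else 0)"

lemma conv_assoc: "conv (conv A B) C = conv A (conv B C)"
proof
  fix f
  have "conv (conv A B) C f = SW (cop f) (\<lambda>k. SW (cop (fst k)) (\<lambda>j. A (fst j) * B (snd j) * C (snd k)))"
    unfolding conv_def by (simp add: SW_cmult_right)
  also have "\<dots> = SW (cop f) (\<lambda>k. SW (cop (snd k)) (\<lambda>j. A (fst k) * B (fst j) * C (snd j)))"
    by (rule coassoc)
  also have "\<dots> = conv A (conv B C) f"
    unfolding conv_def by (simp add: SW_cmult_left mult.assoc)
  finally show "conv (conv A B) C f = conv A (conv B C) f" .
qed

lemma conv_eps_left: "conv eps A = A"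
proof
  fix f
  show "conv eps A f = A f"
  proof -
    have "conv eps A f = SW (cop f) (\<lambda>k. if fst k = {#} then A (snd k) else 0)"
      unfolding conv_def by (intro SW_cong) (simp add: eps_def)
    then show ?thesis using cop_counit_L[of f A] by simp
  qed
qed

lemma conv_eps_right: "conv A eps = A"
proof
  fix f
  show "conv A eps f = A f"
  proof -
    have "conv A eps f = SW (cop f) (\<lambda>k. if snd k = {#} then A (fst k) else 0)"
      unfolding conv_def by (intro SW_cong) (simp add: eps_def)
    then show ?thesis using cop_counit_R[of f A] by simp
  qed
qed

lemma conv_neg_left: "conv (\<lambda>x. - A x) B f = - conv A B f"
  unfolding conv_def by (simp add: SW_fneg)

lemma conv_Y:
  "of_nat (fsize f) * conv A B f
   = conv (\<lambda>x. of_nat (fsize x) * A x) B f + conv A (\<lambda>x. of_nat (fsize x) * B x) f"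
proof -
  have "of_nat (fsize f) * conv A B f = SW (cop f) (\<lambda>k. of_nat (fsize f) * (A (fst k) * B (snd k)))"
    unfolding conv_def by (simp add: SW_cmult_left)
  also have "\<dots> = SW (cop f) (\<lambda>k. of_nat (fsize (fst k)) * A (fst k) * B (snd k)
                               + A (fst k) * (of_nat (fsize (snd k)) * B (snd k)))"
  proof (intro SW_cong)
    fix k assume "k \<in> Poly_Mapping.keys (cop f)"
    then have "fsize f = fsize (fst k) + fsize (snd k)" using keys_cop_size by simp
    then show "of_nat (fsize f) * (A (fst k) * B (snd k)) = of_nat (fsize (fst k)) * A (fst k) * B (snd k)
                               + A (fst k) * (of_nat (fsize (snd k)) * B (snd k))"
      by (simp add: algebra_simps)
  qed
  also have "\<dots> = conv (\<lambda>x. of_nat (fsize x) * A x) B f + conv A (\<lambda>x. of_nat (fsize x) * B x) f"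
    unfolding conv_def by (rule SW_fadd)
  finally show ?thesis .
qed

lemma left_inv_gen:
  assumes L0: "L {#} = 1" and G0: "G {#} = 1"
    and Lr: "\<And>f. f \<noteq> {#} \<Longrightarrow> L f = - (\<Sum>k\<in>{k\<in>Poly_Mapping.keys (cop f). snd k \<noteq> {#}}.
          fls_const (Poly_Mapping.lookup (cop f) k) * L (fst k) * G (snd k))"
  shows "conv L G = eps"
proof
  fix f
  show "conv L G f = eps f"
  proof (cases "f = {#}")
    case True then show ?thesis by (simp add: conv_def eps_def L0 G0)
  next
    case False
    have "conv L G f = SW (cop f) (\<lambda>k. if snd k = {#} then L (fst k) else 0)
        + SW (cop f) (\<lambda>k. if snd k \<noteq> {#} then L (fst k) * G (snd k) else 0)"
      unfolding conv_def SW_fadd[symmetric] by (intro SW_cong) (auto simp: G0)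
    also have "SW (cop f) (\<lambda>k. if snd k = {#} then L (fst k) else 0) = L f"
      by (rule cop_counit_R)
    also have "SW (cop f) (\<lambda>k. if snd k \<noteq> {#} then L (fst k) * G (snd k) else 0)
        = (\<Sum>k\<in>{k\<in>Poly_Mapping.keys (cop f). snd k \<noteq> {#}}.
          fls_const (Poly_Mapping.lookup (cop f) k) * L (fst k) * G (snd k))"
      unfolding SW_def by (simp add: if_distrib sum.inter_filter mult.assoc cong: if_cong)
    finally show ?thesis using Lr[OF False] False by (simp add: eps_def)
  qed
qed

function linv :: "(forest \<Rightarrow> complex fls) \<Rightarrow> forest \<Rightarrow> complex fls" where
  "linv G f = (if f = {#} then 1 else
     - (\<Sum>k\<in>{k\<in>Poly_Mapping.keys (cop f). snd k \<noteq> {#}}.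
          fls_const (Poly_Mapping.lookup (cop f) k) * linv G (fst k) * G (snd k)))"
  by pat_completeness auto
termination
proof (relation "measure (\<lambda>(G, f). fsize f)")
  fix G f k
  assume "\<not> f = {#}" "k \<in> {k\<in>Poly_Mapping.keys (cop f). snd k \<noteq> {#}}"
  then show "((G, fst k), (G, f)) \<in> measure (\<lambda>(G, f). fsize f)"
    using keys_cop_size[of k f] fsize_pos[of "snd k"] by auto
qed auto

declare linv.simps [simp del]

lemma right_inv:
  assumes "conv A B = eps" "A {#} = 1"
  shows "conv B A = eps"
proof -
  let ?L = "linv A"
  have LA: "conv ?L A = eps"
    by (rule left_inv_gen) (auto simp: assms(2) linv.simps[of A])
  have "?L = conv ?L eps" by (simp add: conv_eps_right)
  also have "\<dots> = conv (conv ?L A) B" by (simp add: assms(1) conv_assoc)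
  also have "\<dots> = B" by (simp add: LA conv_eps_left)
  finally have "?L = B" .
  with LA show ?thesis by simp
qed



lemma iz_zero [simp]: "in_zpow_fps m 0"
  by (simp add: in_zpow_fps_def)

lemma iz_add: "in_zpow_fps m x \<Longrightarrow> in_zpow_fps m y \<Longrightarrow> in_zpow_fps m (x + y)"
  by (simp add: in_zpow_fps_def)

lemma iz_neg: "in_zpow_fps m x \<Longrightarrow> in_zpow_fps m (- x)"
  by (simp add: in_zpow_fps_def)

lemma iz_sum: "(\<And>i. i \<in> I \<Longrightarrow> in_zpow_fps m (x i)) \<Longrightarrow> in_zpow_fps m (\<Sum>i\<in>I. x i)"
  by (simp add: in_zpow_fps_def fls_nth_sum)

lemma iz_mono: "m' \<le> m \<Longrightarrow> in_zpow_fps m x \<Longrightarrow> in_zpow_fps m' x"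
  by (simp add: in_zpow_fps_def)

lemma iz_mult:
  assumes "in_zpow_fps m x" "in_zpow_fps n y"
  shows "in_zpow_fps (m + n) (x * y)"
proof (cases "x = 0 \<or> y = 0")
  case True then show ?thesis by auto
next
  case False
  then have "m \<le> fls_subdegree x" "n \<le> fls_subdegree y"
    using assms by (auto simp: in_zpow_fps_def intro!: fls_subdegree_geI)
  then show ?thesis
    unfolding in_zpow_fps_def by (auto intro!: fls_times_nth_eq0)
qed

lemma iz_const [simp]: "in_zpow_fps 0 (fls_const c)"
  by (simp add: in_zpow_fps_def)

lemma iz_of_nat [simp]: "in_zpow_fps 0 (of_nat c :: complex fls)"
  by (simp add: in_zpow_fps_def fls_of_nat_nth)

lemma iz_const_mult: "in_zpow_fps m x \<Longrightarrow> in_zpow_fps m (fls_const c * x)"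
  using iz_mult[OF iz_const[of c], of m x] by simp

lemma iz_of_nat_mult: "in_zpow_fps m x \<Longrightarrow> in_zpow_fps m (of_nat c * x)"
  using iz_mult[OF iz_of_nat[of c], of m x] by simp

lemma iz_SW: "(\<And>k. k \<in> Poly_Mapping.keys X \<Longrightarrow> in_zpow_fps m (F k)) \<Longrightarrow> in_zpow_fps m (SW X F)"
  unfolding SW_def by (intro iz_sum iz_const_mult) auto

section \<open>Characters\<close>

context
  fixes \<phi> :: "HR \<Rightarrow> complex fls"
  assumes ch: "character \<phi>"
begin

lemma ch_add: "\<phi> (x + y) = \<phi> x + \<phi> y"
  using ch by (simp add: character_def)

lemma ch_mult: "\<phi> (x * y) = \<phi> x * \<phi> y"
  using ch by (simp add: character_def)

lemma ch_const: "\<phi> (Poly_Mapping.single {#} c) = fls_const c"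
  using ch by (simp add: character_def)

lemma ch_zero: "\<phi> 0 = 0"
  using ch_add[of 0 0] by simp

lemma ch_uminus: "\<phi> (- x) = - \<phi> x"
  using ch_add[of x "-x"] ch_zero by (simp add: eq_neg_iff_add_eq_0 add.commute)

lemma ch_sum: "\<phi> (\<Sum>i\<in>I. x i) = (\<Sum>i\<in>I. \<phi> (x i))"
  by (induction I rule: infinite_finite_induct) (auto simp: ch_zero ch_add)

definition Phi :: "forest \<Rightarrow> complex fls" where
  "Phi f = \<phi> (forest_elem f)"

definition Psi :: "forest \<Rightarrow> complex fls" where
  "Psi f = \<phi> (antipode f)"

lemma Phi_empty: "Phi {#} = 1"
  unfolding Phi_def forest_elem_def using ch_const[of 1] by simp

lemma Psi_empty: "Psi {#} = 1"
  unfolding Psi_def using ch_const[of 1] by (simp add: antipode.simps[of "{#}"])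

lemma Psi_rec:
  assumes "f \<noteq> {#}"
  shows "Psi f = - (\<Sum>k\<in>{k\<in>Poly_Mapping.keys (cop f). snd k \<noteq> {#}}.
          fls_const (Poly_Mapping.lookup (cop f) k) * Psi (fst k) * Phi (snd k))"
  unfolding Psi_def Phi_def forest_elem_def
  by (subst antipode.simps) (simp add: assms ch_uminus ch_sum ch_mult ch_const)

lemma Psi_Phi: "conv Psi Phi = eps"
  by (rule left_inv_gen) (auto simp: Psi_empty Phi_empty Psi_rec)

lemma Phi_Psi: "conv Phi Psi = eps"
  by (rule right_inv[OF Psi_Phi Psi_empty])

definition beta :: "nat \<Rightarrow> forest \<Rightarrow> complex fls" where
  "beta n = conv Psi (\<lambda>x. of_nat (fsize x) ^ n * Phi x)"

lemma beta_0: "beta 0 = eps"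
  by (simp add: beta_def Psi_Phi)

lemma beta_Suc: "beta (Suc n) f = of_nat (fsize f) * beta n f + conv (beta 1) (beta n) f"
proof -
  define PsiY where "PsiY x = of_nat (fsize x) * Psi x" for x
  define Phin where "Phin m x = of_nat (fsize x) ^ m * Phi x" for m x
  have a: "of_nat (fsize g) * beta m g = conv PsiY (Phin m) g + beta (Suc m) g" for m g
    using conv_Y[of g Psi "Phin m"] unfolding beta_def PsiY_def Phin_def
    by (simp add: mult.assoc)
  have b: "conv Phi (beta m) = Phin m" for m
    unfolding beta_def Phin_def
    by (simp add: conv_assoc[symmetric] Phi_Psi conv_eps_left)
  have d: "conv PsiY Phi g = - beta 1 g" for g
  proof -
    have "Phin 0 = Phi" by (simp add: Phin_def fun_eq_iff)
    then have "of_nat (fsize g) * beta 0 g = conv PsiY Phi g + beta 1 g"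
      using a[of g 0] by simp
    moreover have "of_nat (fsize g) * beta 0 g = 0"
      by (simp add: beta_0 eps_def)
    ultimately show ?thesis by (simp add: eq_neg_iff_add_eq_0)
  qed
  have "conv PsiY (Phin n) = conv (conv PsiY Phi) (beta n)"
    by (simp add: b[symmetric] conv_assoc)
  also have "conv PsiY Phi = (\<lambda>g. - beta 1 g)" using d by auto
  finally have c: "conv PsiY (Phin n) f = - conv (beta 1) (beta n) f"
    by (simp add: conv_neg_left)
  show ?thesis using a[of f n] c by (simp add: algebra_simps)
qed

lemma beta_order:
  assumes "\<And>f. in_zpow_fps (-1) (beta 1 f)"
  shows "in_zpow_fps (- int n) (beta n f)"
proof (induction n arbitrary: f)
  case 0
  then show ?case by (simp add: beta_0 eps_def in_zpow_fps_def)
next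
  case (Suc n)
  have 1: "in_zpow_fps (- int (Suc n)) (of_nat (fsize f) * beta n f)"
    by (rule iz_of_nat_mult, rule iz_mono[OF _ Suc.IH]) simp
  have 2: "in_zpow_fps (- int (Suc n)) (conv (beta 1) (beta n) f)"
    unfolding conv_def
    using iz_mult[OF assms Suc.IH] by (intro iz_SW) simp
  show ?case by (simp only: beta_Suc) (rule iz_add[OF 1 2])
qed

end



unbundle fps_syntax

lemma fps_fls_mult_nth:
  fixes F :: "complex fps" and g :: "complex fls"
  assumes g: "in_zpow_fps d g"
  shows "(fps_to_fls F * g) $$ j = (\<Sum>i\<le>nat (j - d). F $ i * g $$ (j - int i))"
proof (cases "g = 0")
  case True then show ?thesis by simp
next
  case False
  define f where "f = fps_to_fls F"
  have dg: "d \<le> fls_subdegree g"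
    using g False by (auto simp: in_zpow_fps_def intro!: fls_subdegree_geI)
  have df: "0 \<le> fls_subdegree f"
    unfolding f_def by (rule fls_subdegree_fls_to_fps_gt0)
  have "(f * g) $$ j = (\<Sum>i=fls_subdegree f..j - fls_subdegree g. f $$ i * g $$ (j - i))"
    by (rule fls_times_nth(2))
  also have "\<dots> = (\<Sum>i=0..j - d. f $$ i * g $$ (j - i))"
  proof (rule sum.mono_neutral_left)
    show "{fls_subdegree f..j - fls_subdegree g} \<subseteq> {0..j - d}" using dg df by auto
    show "\<forall>i\<in>{0..j - d} - {fls_subdegree f..j - fls_subdegree g}. f $$ i * g $$ (j - i) = 0"
    proof
      fix i assume "i \<in> {0..j - d} - {fls_subdegree f..j - fls_subdegree g}"
      then have "i < fls_subdegree f \<or> j - i < fls_subdegree g" by auto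
      then show "f $$ i * g $$ (j - i) = 0" by auto
    qed
  qed simp
  also have "\<dots> = (\<Sum>i\<le>nat (j - d). f $$ int i * g $$ (j - int i))"
  proof (cases "j - d < 0")
    case True
    then have "g $$ j = 0" using g by (simp add: in_zpow_fps_def)
    with True show ?thesis by simp
  next
    case False
    then have "{0..j - d} = int ` {..nat (j - d)}"
      by (auto simp: image_iff intro!: bexI[of _ "nat _"])
    then show ?thesis by (simp add: sum.reindex)
  qed
  finally show ?thesis by (simp add: f_def)
qed

lemma fls_of_nat_pow_mult_nth: "((of_nat c :: complex fls) ^ i * p) $$ l = of_nat c ^ i * p $$ l"
proof -
  have "(of_nat c :: complex fls) ^ i = fls_const (of_nat (c ^ i))"
    by (induction i) (simp_all add: fls_of_nat)
  then show ?thesis by simp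
qed

lemma exp_equiv:
  fixes P :: "'k \<Rightarrow> complex fls" and m :: "'k \<Rightarrow> nat"
  assumes K: "finite K"
  shows "(\<forall>n. in_zpow_fps (- int n) (\<Sum>k\<in>K. of_nat (m k) ^ n * P k))
     \<longleftrightarrow> (\<forall>s. in_zpow_fps 0 (\<Sum>k\<in>K. fps_to_fls (fps_exp (s * of_nat (m k))) * P k))"
proof -
  define B where "B n = (\<Sum>k\<in>K. (of_nat (m k) :: complex fls) ^ n * P k)" for n
  define E where "E s = (\<Sum>k\<in>K. fps_to_fls (fps_exp (s * of_nat (m k))) * P k)" for s
  define N where "N = (\<Sum>k\<in>K. nat (- fls_subdegree (P k)))"
  have PN: "in_zpow_fps (- int N) (P k)" if "k \<in> K" for k
  proof -
    have "nat (- fls_subdegree (P k)) \<le> N"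
      unfolding N_def using K that by (intro member_le_sum) auto
    then show ?thesis by (auto simp: in_zpow_fps_def)
  qed
  have Bnth: "B n $$ l = (\<Sum>k\<in>K. of_nat (m k) ^ n * P k $$ l)" for n l
    unfolding B_def by (simp add: fls_nth_sum fls_of_nat_pow_mult_nth)
  have BN: "in_zpow_fps (- int N) (B n)" for n
    unfolding B_def of_nat_power[symmetric]
    by (intro iz_sum iz_of_nat_mult PN)
  have Enth: "E s $$ j = (\<Sum>i\<le>nat (j + int N). s ^ i / of_nat (fact i) * B i $$ (j - int i))" for s j
  proof -
    have "E s $$ j = (\<Sum>k\<in>K. \<Sum>i\<le>nat (j + int N). (s * of_nat (m k)) ^ i / of_nat (fact i) * P k $$ (j - int i))"
      unfolding E_def fls_nth_sum
      by (intro sum.cong refl) (simp add: fps_fls_mult_nth[OF PN])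
    also have "\<dots> = (\<Sum>i\<le>nat (j + int N). \<Sum>k\<in>K. (s * of_nat (m k)) ^ i / of_nat (fact i) * P k $$ (j - int i))"
      by (rule sum.swap)
    also have "\<dots> = (\<Sum>i\<le>nat (j + int N). s ^ i / of_nat (fact i) * B i $$ (j - int i))"
      unfolding Bnth sum_distrib_left
      by (intro sum.cong refl) (simp add: power_mult_distrib field_simps)
    finally show ?thesis .
  qed
  show ?thesis
    unfolding B_def[symmetric] E_def[symmetric]
  proof
    assume H: "\<forall>n. in_zpow_fps (- int n) (B n)"
    show "\<forall>s. in_zpow_fps 0 (E s)"
    proof (intro allI)
      fix s
      show "in_zpow_fps 0 (E s)"
        unfolding in_zpow_fps_def
      proof (intro allI impI)
        fix j :: int assume "j < 0"
        then have "B i $$ (j - int i) = 0" for i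
          using H by (simp add: in_zpow_fps_def)
        then show "E s $$ j = 0" by (simp add: Enth)
      qed
    qed
  next
    assume H: "\<forall>s. in_zpow_fps 0 (E s)"
    show "\<forall>n. in_zpow_fps (- int n) (B n)"
    proof (intro allI)
      fix n
      show "in_zpow_fps (- int n) (B n)"
        unfolding in_zpow_fps_def
      proof (intro allI impI)
        fix j :: int assume j: "j < - int n"
        show "B n $$ j = 0"
        proof (cases "j < - int N")
          case True then show ?thesis using BN[of n] by (simp add: in_zpow_fps_def)
        next
          case False
          define j' where "j' = j + int n"
          define M where "M = nat (j' + int N)"
          have nM: "n \<le> M" using False unfolding M_def j'_def by simp
          have "\<forall>s. (\<Sum>i\<le>M. (B i $$ (j' - int i) / of_nat (fact i)) * s ^ i) = 0"
          proof
            fix s :: complex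
            have "E s $$ j' = 0" using H j unfolding j'_def by (simp add: in_zpow_fps_def)
            then show "(\<Sum>i\<le>M. (B i $$ (j' - int i) / of_nat (fact i)) * s ^ i) = 0"
              unfolding Enth M_def by (simp add: field_simps)
          qed
          then have "\<forall>i\<le>M. B i $$ (j' - int i) / of_nat (fact i) = 0"
            by (rule polyfun_eq_0[THEN iffD1])
          then have "B n $$ (j' - int n) / of_nat (fact n) = 0" using nM by blast
          then show ?thesis unfolding j'_def by simp
        qed
      qed
    qed
  qed
qed



lemma sweedler_SW: "sweedler_sum X F = SW X (\<lambda>k. F (fst k) (snd k))"
  by (simp add: sweedler_sum_def SW_def)

lemma sweedler_coproduct:
  "sweedler_sum (coproduct w) F
   = (\<Sum>f\<in>Poly_Mapping.keys w. fls_const (Poly_Mapping.lookup w f) * SW (cop f) (\<lambda>k. F (fst k) (snd k)))"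
  unfolding sweedler_SW coproduct_def SW_sum by (simp add: SW_mult)

lemma sweedler_forest:
  "sweedler_sum (coproduct (forest_elem f)) F = SW (cop f) (\<lambda>k. F (fst k) (snd k))"
  unfolding sweedler_coproduct by (simp add: forest_elem_def)

theorem mainTheorem16:
  fixes \<phi> :: "HR \<Rightarrow> complex fls"
  assumes "character \<phi>"
  shows
    "((\<forall>w::HR. in_zpow_fps (-1) (sweedler_sum (coproduct w)
          (\<lambda>w1 w2. \<phi> (antipode w1) * of_nat (fsize w2) * \<phi> (forest_elem w2))))
      \<longleftrightarrow>
      (\<forall>(n::nat) (w::HR). in_zpow_fps (- int n) (sweedler_sum (coproduct w)
          (\<lambda>w1 w2. \<phi> (antipode w1) * of_nat (fsize w2) ^ n * \<phi> (forest_elem w2)))))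
     \<and>
     ((\<forall>w::HR. in_zpow_fps (-1) (sweedler_sum (coproduct w)
          (\<lambda>w1 w2. \<phi> (antipode w1) * of_nat (fsize w2) * \<phi> (forest_elem w2))))
      \<longleftrightarrow>
      (\<forall>(s::complex) (w::HR). in_zpow_fps 0 (sweedler_sum (coproduct w)
          (\<lambda>w1 w2. \<phi> (antipode w1) * fps_to_fls (fps_exp (s * of_nat (fsize w2)))
                    * \<phi> (forest_elem w2)))))"
proof -
  let ?Fn = "\<lambda>n w1 w2. \<phi> (antipode w1) * of_nat (fsize w2) ^ n * \<phi> (forest_elem w2)"
  let ?Es = "\<lambda>s w1 w2. \<phi> (antipode w1) * fps_to_fls (fps_exp (s * of_nat (fsize w2))) * \<phi> (forest_elem w2)"
  let ?A = "\<forall>w::HR. in_zpow_fps (-1) (sweedler_sum (coproduct w)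
          (\<lambda>w1 w2. \<phi> (antipode w1) * of_nat (fsize w2) * \<phi> (forest_elem w2)))"
  let ?B = "\<forall>(n::nat) (w::HR). in_zpow_fps (- int n) (sweedler_sum (coproduct w) (?Fn n))"
  let ?C = "\<forall>(s::complex) (w::HR). in_zpow_fps 0 (sweedler_sum (coproduct w) (?Es s))"
  have bn: "SW (cop f) (\<lambda>k. ?Fn n (fst k) (snd k)) = beta \<phi> n f" for n f
    unfolding beta_def[OF assms] conv_def Psi_def[OF assms] Phi_def[OF assms]
    by (simp add: mult.assoc)
  have AB: "?A \<longleftrightarrow> ?B"
  proof
    assume A: ?A
    have b1: "in_zpow_fps (-1) (beta \<phi> 1 f)" for f
      using A[rule_format, of "forest_elem f"] bn[where n=1 and f=f] by (simp add: sweedler_forest)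
    show ?B
    proof (intro allI)
      fix n w
      show "in_zpow_fps (- int n) (sweedler_sum (coproduct w) (?Fn n))"
        unfolding sweedler_coproduct bn
        by (intro iz_sum iz_const_mult beta_order[OF assms b1])
    qed
  next
    assume B: ?B
    show ?A
    proof
      fix w
      show "in_zpow_fps (-1) (sweedler_sum (coproduct w)
          (\<lambda>w1 w2. \<phi> (antipode w1) * of_nat (fsize w2) * \<phi> (forest_elem w2)))"
      proof -
        have "in_zpow_fps (- int 1) (sweedler_sum (coproduct w) (?Fn 1))" using B by blast
        then show ?thesis by simp
      qed
    qed
  qed
  have BC: "(\<forall>n. in_zpow_fps (- int n) (sweedler_sum (coproduct w) (?Fn n)))
        \<longleftrightarrow> (\<forall>s. in_zpow_fps 0 (sweedler_sum (coproduct w) (?Es s)))" for w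
  proof -
    let ?X = "coproduct w"
    define P where "P k = fls_const (Poly_Mapping.lookup ?X k) * \<phi> (antipode (fst k)) * \<phi> (forest_elem (snd k))" for k
    define m where "m k = fsize (snd k)" for k :: "forest \<times> forest"
    have 1: "sweedler_sum ?X (?Fn n) = (\<Sum>k\<in>Poly_Mapping.keys ?X. of_nat (m k) ^ n * P k)" for n
      unfolding sweedler_sum_def P_def m_def by (intro sum.cong refl) (simp add: mult_ac)
    have 2: "sweedler_sum ?X (?Es s) = (\<Sum>k\<in>Poly_Mapping.keys ?X. fps_to_fls (fps_exp (s * of_nat (m k))) * P k)" for s
      unfolding sweedler_sum_def P_def m_def by (intro sum.cong refl) (simp add: mult_ac)
    show ?thesis unfolding 1 2 by (rule exp_equiv) simp
  qed
  have "?B \<longleftrightarrow> ?C" using BC by blast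
  with AB show ?thesis by blast
qed


end
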